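(* Let $X$ be a summable vertex parameter, and let $G=\bigsqcup_{i=1}^N G_i$ be the disjoint union of graphs $G_1,\dots,G_N$. Then $\mathcal{R}^{\mathrm{TE}}_X(G)\cong G_1'\,\square\,\cdots\,\square\, G_N'$ where $G_i'=\mathcal{R}^{\mathrm{TE}}_X(G_i)$, and $\mathcal{R}^{\mathrm{TS}}_X(G)\cong \mathcal{R}^{\mathrm{TS}}_X(G_1)\,\square\,\cdots\,\square\,\mathcal{R}^{\mathrm{TS}}_X(G_N)$, where $\square$ denotes the Cartesian product of graphs.
   Context: All graphs are finite and simple. A graph parameter $X$ is a vertex parameter defined by property $x$ if there is a property $x$ of vertex subsets such that for every graph $G$, $X(G)$ equals either (for every graph) the maximum, or (for every graph) the minimum, of $|B|$ over all $B\subseteq V(G)$ having property $x$ in $G$. $X$ is summable if for every graph $G$: $B\subseteq V(G)$ has property $x$ in $G$ if and only if $B=\bigcup_{C}B_C$ over the connected components $C$ of $G$, where each $B_C\subseteq V(C)$ has property $x$ in $C$. The token exchange $X$-reconfiguration graph $\mathcal{R}^{\mathrm{TE}}_X(G)$ has as vertices all $S\subseteq V(G)$ with $|S|=X(G)$ having property $x$ in $G$, with $S_1S_2$ an edge iff there exist $v_1\in S_1\setminus S_2$, $v_2\in S_2\setminus S_1$ with $S_1\setminus\{v_1\}=S_2\setminus\{v_2\}$. The token sliding graph $\mathcal{R}^{\mathrm{TS}}_X(G)$ has the same vertices, with the additional requirement $v_1v_2\in E(G)$ for adjacency. *)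

theory Defs
  imports Main "HOL-Library.FuncSet"
begin

type_synonym 'v graph = "'v set \<times> 'v set set"

abbreviation verts :: "'v graph \<Rightarrow> 'v set" where "verts G \<equiv> fst G"
abbreviation edges :: "'v graph \<Rightarrow> 'v set set" where "edges G \<equiv> snd G"

definition graph :: "'v graph \<Rightarrow> bool" where
  "graph G \<longleftrightarrow> finite (verts G) \<and>
     (\<forall>e\<in>edges G. \<exists>u v. e = {u, v} \<and> u \<noteq> v \<and> u \<in> verts G \<and> v \<in> verts G)"

definition adj :: "'v graph \<Rightarrow> 'v \<Rightarrow> 'v \<Rightarrow> bool" where
  "adj G u v \<longleftrightarrow> {u, v} \<in> edges G"

definition induced :: "'v graph \<Rightarrow> 'v set \<Rightarrow> 'v graph" where
  "induced G C = (C, {e \<in> edges G. e \<subseteq> C})"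

definition comp_sets :: "'v graph \<Rightarrow> 'v set set" where
  "comp_sets G = {{v. (adj G)\<^sup>*\<^sup>* u v} | u. u \<in> verts G}"

definition components :: "'v graph \<Rightarrow> 'v graph set" where
  "components G = induced G ` comp_sets G"

text \<open>A vertex parameter is given by a flag (maximum or minimum) and a property
  x of vertex subsets; x G B is only consulted for B \<subseteq> V(G).\<close>
definition param_val :: "bool \<Rightarrow> ('v graph \<Rightarrow> 'v set \<Rightarrow> bool) \<Rightarrow> 'v graph \<Rightarrow> nat" where
  "param_val is_max x G =
     (if is_max then Max {card B | B. B \<subseteq> verts G \<and> x G B}
      else Min {card B | B. B \<subseteq> verts G \<and> x G B})"

definition summable :: "('v graph \<Rightarrow> 'v set \<Rightarrow> bool) \<Rightarrow> bool" where
  "summable x \<longleftrightarrow> (\<forall>G. graph G \<longrightarrow> (\<forall>B. B \<subseteq> verts G \<longrightarrow>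
     (x G B \<longleftrightarrow> (\<exists>f. (\<forall>C\<in>components G. f C \<subseteq> verts C \<and> x C (f C))
                      \<and> B = (\<Union>C\<in>components G. f C)))))"

definition sol_sets :: "bool \<Rightarrow> ('v graph \<Rightarrow> 'v set \<Rightarrow> bool) \<Rightarrow> 'v graph \<Rightarrow> 'v set set" where
  "sol_sets is_max x G = {S. S \<subseteq> verts G \<and> x G S \<and> card S = param_val is_max x G}"

definition R_TE :: "bool \<Rightarrow> ('v graph \<Rightarrow> 'v set \<Rightarrow> bool) \<Rightarrow> 'v graph \<Rightarrow> 'v set graph" where
  "R_TE is_max x G = (sol_sets is_max x G,
     {{S1, S2} | S1 S2. S1 \<in> sol_sets is_max x G \<and> S2 \<in> sol_sets is_max x G \<and>
        (\<exists>v1\<in>S1 - S2. \<exists>v2\<in>S2 - S1. S1 - {v1} = S2 - {v2})})"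

definition R_TS :: "bool \<Rightarrow> ('v graph \<Rightarrow> 'v set \<Rightarrow> bool) \<Rightarrow> 'v graph \<Rightarrow> 'v set graph" where
  "R_TS is_max x G = (sol_sets is_max x G,
     {{S1, S2} | S1 S2. S1 \<in> sol_sets is_max x G \<and> S2 \<in> sol_sets is_max x G \<and>
        (\<exists>v1\<in>S1 - S2. \<exists>v2\<in>S2 - S1. S1 - {v1} = S2 - {v2} \<and> {v1, v2} \<in> edges G)})"

text \<open>Disjoint union of the graphs H 1, ..., H N (vertex sets assumed pairwise disjoint).\<close>
definition union_graph :: "nat \<Rightarrow> (nat \<Rightarrow> 'v graph) \<Rightarrow> 'v graph" where
  "union_graph N H = ((\<Union>i\<in>{1..N}. verts (H i)), (\<Union>i\<in>{1..N}. edges (H i)))"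

text \<open>Cartesian product H 1 \<box> ... \<box> H N: tuples (extensional functions on {1..N}),
  adjacent iff they differ in exactly one coordinate, where they are adjacent.\<close>
definition cart_prod :: "nat \<Rightarrow> (nat \<Rightarrow> 'a graph) \<Rightarrow> (nat \<Rightarrow> 'a) graph" where
  "cart_prod N H = (Pi\<^sub>E {1..N} (\<lambda>i. verts (H i)),
     {{f, g} | f g. f \<in> Pi\<^sub>E {1..N} (\<lambda>i. verts (H i)) \<and> g \<in> Pi\<^sub>E {1..N} (\<lambda>i. verts (H i)) \<and>
        (\<exists>j\<in>{1..N}. {f j, g j} \<in> edges (H j) \<and> (\<forall>i\<in>{1..N} - {j}. f i = g i))})"

definition graph_iso :: "'a graph \<Rightarrow> 'b graph \<Rightarrow> bool" where
  "graph_iso G H \<longleftrightarrow> (\<exists>\<phi>. bij_betw \<phi> (verts G) (verts H) \<and>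
     (\<forall>u\<in>verts G. \<forall>v\<in>verts G. {u, v} \<in> edges G \<longleftrightarrow> {\<phi> u, \<phi> v} \<in> edges H))"

end

theory Submission imports Defs begin

definition exq :: "('v \<Rightarrow> 'v \<Rightarrow> bool) \<Rightarrow> 'v set \<Rightarrow> 'v set \<Rightarrow> bool" where
  "exq Q S1 S2 \<longleftrightarrow> (\<exists>v1\<in>S1 - S2. \<exists>v2\<in>S2 - S1. S1 - {v1} = S2 - {v2} \<and> Q v1 v2)"

definition Rg :: "('v graph \<Rightarrow> 'v \<Rightarrow> 'v \<Rightarrow> bool) \<Rightarrow> bool \<Rightarrow> ('v graph \<Rightarrow> 'v set \<Rightarrow> bool) \<Rightarrow> 'v graph \<Rightarrow> 'v set graph" where
  "Rg Q m x K = (sol_sets m x K,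
     {{S1, S2} | S1 S2. S1 \<in> sol_sets m x K \<and> S2 \<in> sol_sets m x K \<and> exq (Q K) S1 S2})"

lemma R_TE_eq: "R_TE m x K = Rg (\<lambda>K a b. True) m x K"
  unfolding R_TE_def Rg_def exq_def by simp

lemma R_TS_eq: "R_TS m x K = Rg (\<lambda>K a b. {a, b} \<in> edges K) m x K"
  unfolding R_TS_def Rg_def exq_def by simp

lemma exq_sym: assumes "\<And>a b. Q a b = Q b a" "exq Q A B" shows "exq Q B A"
proof -
  obtain v1 v2 where "v1 \<in> A - B" "v2 \<in> B - A" "A - {v1} = B - {v2}" "Q v1 v2"
    using assms(2) unfolding exq_def by blast
  then show ?thesis unfolding exq_def using assms(1)[of v1 v2] by metis
qed

lemma Rg_edge:
  assumes sym: "\<And>a b. Q K a b = Q K b a" and S: "S1 \<in> sol_sets m x K" "S2 \<in> sol_sets m x K"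
  shows "{S1, S2} \<in> edges (Rg Q m x K) \<longleftrightarrow> exq (Q K) S1 S2"
proof
  assume "{S1, S2} \<in> edges (Rg Q m x K)"
  then obtain A B where AB: "{S1, S2} = {A, B}" "exq (Q K) A B" unfolding Rg_def by auto
  then have "(S1 = A \<and> S2 = B) \<or> (S1 = B \<and> S2 = A)" by (simp add: doubleton_eq_iff)
  then show "exq (Q K) S1 S2" using AB(2) exq_sym[of "Q K"] sym by blast
next
  assume "exq (Q K) S1 S2"
  then show "{S1, S2} \<in> edges (Rg Q m x K)" unfolding Rg_def using S by auto
qed

lemma cart_edge:
  assumes f: "f \<in> Pi\<^sub>E {1..N} (\<lambda>i. verts (R i))" and g: "g \<in> Pi\<^sub>E {1..N} (\<lambda>i. verts (R i))"
  shows "{f, g} \<in> edges (cart_prod N R) \<longleftrightarrow>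
    (\<exists>j\<in>{1..N}. {f j, g j} \<in> edges (R j) \<and> (\<forall>i\<in>{1..N} - {j}. f i = g i))"
proof
  assume "{f, g} \<in> edges (cart_prod N R)"
  then obtain f' g' where fg: "{f, g} = {f', g'}"
    "\<exists>j\<in>{1..N}. {f' j, g' j} \<in> edges (R j) \<and> (\<forall>i\<in>{1..N} - {j}. f' i = g' i)"
    unfolding cart_prod_def by auto
  then have "(f = f' \<and> g = g') \<or> (f = g' \<and> g = f')" by (simp add: doubleton_eq_iff)
  then show "\<exists>j\<in>{1..N}. {f j, g j} \<in> edges (R j) \<and> (\<forall>i\<in>{1..N} - {j}. f i = g i)"
  proof
    assume "f = f' \<and> g = g'" then show ?thesis using fg(2) by simp
  next
    assume e: "f = g' \<and> g = f'"
    from fg(2) obtain j where j: "j \<in> {1..N}" "{f' j, g' j} \<in> edges (R j)" "\<forall>i\<in>{1..N} - {j}. f' i = g' i"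
      by blast
    have "{f j, g j} \<in> edges (R j)" using j(2) e by (simp add: insert_commute)
    moreover have "\<forall>i\<in>{1..N} - {j}. f i = g i" using j(3) e by simp
    ultimately show ?thesis using j(1) by blast
  qed
next
  assume "\<exists>j\<in>{1..N}. {f j, g j} \<in> edges (R j) \<and> (\<forall>i\<in>{1..N} - {j}. f i = g i)"
  then show "{f, g} \<in> edges (cart_prod N R)" unfolding cart_prod_def using f g by auto
qed


locale setup3 =
  fixes x :: "'v graph \<Rightarrow> 'v set \<Rightarrow> bool" and N :: nat and H :: "nat \<Rightarrow> 'v graph"
  assumes summ: "summable x"
    and gr: "\<And>i. i \<in> {1..N} \<Longrightarrow> graph (H i)"
    and disj: "\<And>i j. i \<in> {1..N} \<Longrightarrow> j \<in> {1..N} \<Longrightarrow> i \<noteq> j \<Longrightarrow> verts (H i) \<inter> verts (H j) = {}"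
begin

abbreviation "I \<equiv> {1..N}"
abbreviation "V i \<equiv> verts (H i)"
abbreviation "G \<equiv> union_graph N H"

lemma vG: "verts G = (\<Union>i\<in>I. V i)" and eG: "edges G = (\<Union>i\<in>I. edges (H i))"
  by (simp_all add: union_graph_def)

lemma edge_in: assumes "i \<in> I" "e \<in> edges (H i)" shows "e \<subseteq> V i \<and> e \<noteq> {}"
proof -
  have "\<forall>e\<in>edges (H i). \<exists>u v. e = {u, v} \<and> u \<noteq> v \<and> u \<in> V i \<and> v \<in> V i"
    using gr[OF assms(1)] unfolding graph_def by (rule conjunct2)
  then obtain u v where "e = {u, v}" "u \<in> V i" "v \<in> V i" using assms(2) by blast
  then show ?thesis by simp
qed

lemma finV: "i \<in> I \<Longrightarrow> finite (V i)"
  using gr unfolding graph_def by (rule conjunct1)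

lemma graphG: "graph G"
proof -
  have "finite (verts G)" unfolding vG using finV by blast
  moreover have "\<forall>e\<in>edges G. \<exists>u v. e = {u, v} \<and> u \<noteq> v \<and> u \<in> verts G \<and> v \<in> verts G"
  proof
    fix e assume "e \<in> edges G"
    then obtain i where i: "i \<in> I" "e \<in> edges (H i)" unfolding eG by blast
    then obtain u v where "e = {u, v} \<and> u \<noteq> v \<and> u \<in> V i \<and> v \<in> V i"
      using gr[of i] unfolding graph_def by blast
    then show "\<exists>u v. e = {u, v} \<and> u \<noteq> v \<and> u \<in> verts G \<and> v \<in> verts G"
      unfolding vG using i by blast
  qed
  ultimately show ?thesis unfolding graph_def by blast
qed

lemma uniq: "i \<in> I \<Longrightarrow> j \<in> I \<Longrightarrow> a \<in> V i \<Longrightarrow> a \<in> V j \<Longrightarrow> i = j"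
  using disj by blast

lemma adjG: assumes "i \<in> I" "u \<in> V i" shows "adj G u v \<longleftrightarrow> adj (H i) u v"
proof
  assume "adj G u v"
  then obtain k where k: "k \<in> I" "{u,v} \<in> edges (H k)" unfolding adj_def eG by blast
  then have "u \<in> V k" using edge_in by blast
  then have "k = i" using uniq assms k by blast
  then show "adj (H i) u v" using k unfolding adj_def by simp
next
  assume "adj (H i) u v" then show "adj G u v" unfolding adj_def eG using assms by blast
qed

lemma reachH: assumes "(adj (H i))\<^sup>*\<^sup>* u v" "i \<in> I" "u \<in> V i"
  shows "v \<in> V i \<and> (adj G)\<^sup>*\<^sup>* u v"
  using assms(1)
proof (induction rule: rtranclp_induct)
  case base then show ?case using assms by simp
next
  case (step y z)
  then have "z \<in> V i" using edge_in[OF assms(2)] unfolding adj_def by blast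
  moreover have "adj G y z" using step adjG[OF assms(2)] by blast
  ultimately show ?case using step by (meson rtranclp.rtrancl_into_rtrancl)
qed

lemma reachG: assumes "(adj G)\<^sup>*\<^sup>* u v" "i \<in> I" "u \<in> V i"
  shows "v \<in> V i \<and> (adj (H i))\<^sup>*\<^sup>* u v"
  using assms(1)
proof (induction rule: rtranclp_induct)
  case base then show ?case using assms by simp
next
  case (step y z)
  then have a: "adj (H i) y z" using adjG[OF assms(2)] by blast
  then have "z \<in> V i" using edge_in[OF assms(2)] unfolding adj_def by blast
  then show ?case using step a by (meson rtranclp.rtrancl_into_rtrancl)
qed

lemma reach_eq: assumes "i \<in> I" "u \<in> V i"
  shows "{v. (adj G)\<^sup>*\<^sup>* u v} = {v. (adj (H i))\<^sup>*\<^sup>* u v}"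
proof (intro set_eqI iffI)
  fix v assume "v \<in> {v. (adj G)\<^sup>*\<^sup>* u v}"
  then show "v \<in> {v. (adj (H i))\<^sup>*\<^sup>* u v}" using reachG[OF _ assms] by simp
next
  fix v assume "v \<in> {v. (adj (H i))\<^sup>*\<^sup>* u v}"
  then show "v \<in> {v. (adj G)\<^sup>*\<^sup>* u v}" using reachH[OF _ assms] by simp
qed

lemma compsets_sub: assumes "i \<in> I" "C \<in> comp_sets (H i)" shows "C \<subseteq> V i \<and> C \<noteq> {}"
proof -
  obtain u where u: "u \<in> V i" "C = {v. (adj (H i))\<^sup>*\<^sup>* u v}"
    using assms(2) unfolding comp_sets_def by blast
  have "C \<subseteq> V i"
  proof
    fix v assume "v \<in> C" then have "(adj (H i))\<^sup>*\<^sup>* u v" using u by simp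
    then show "v \<in> V i" using reachH[OF _ assms(1) u(1)] by simp
  qed
  moreover have "u \<in> C" using u by simp
  ultimately show ?thesis by blast
qed

lemma compsetsG: "comp_sets G = (\<Union>i\<in>I. comp_sets (H i))"
proof
  show "comp_sets G \<subseteq> (\<Union>i\<in>I. comp_sets (H i))"
  proof
    fix C assume "C \<in> comp_sets G"
    then obtain u where u: "u \<in> verts G" "C = {v. (adj G)\<^sup>*\<^sup>* u v}" unfolding comp_sets_def by blast
    then obtain i where i: "i \<in> I" "u \<in> V i" unfolding vG by blast
    have "C = {v. (adj (H i))\<^sup>*\<^sup>* u v}" using reach_eq[OF i] u(2) by simp
    then have "C \<in> comp_sets (H i)" unfolding comp_sets_def using i(2) by blast
    then show "C \<in> (\<Union>i\<in>I. comp_sets (H i))" using i(1) by blast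
  qed
next
  show "(\<Union>i\<in>I. comp_sets (H i)) \<subseteq> comp_sets G"
  proof
    fix C assume "C \<in> (\<Union>i\<in>I. comp_sets (H i))"
    then obtain i where i: "i \<in> I" "C \<in> comp_sets (H i)" by blast
    then obtain u where u: "u \<in> V i" "C = {v. (adj (H i))\<^sup>*\<^sup>* u v}"
      unfolding comp_sets_def by blast
    then have uG: "u \<in> verts G" unfolding vG using i(1) by blast
    have "C = {v. (adj G)\<^sup>*\<^sup>* u v}" using reach_eq[OF i(1) u(1)] u(2) by simp
    then show "C \<in> comp_sets G" unfolding comp_sets_def using uG by blast
  qed
qed

lemma induced_eq: assumes "i \<in> I" "C \<subseteq> V i" shows "induced G C = induced (H i) C"
proof -
  have "{e \<in> edges G. e \<subseteq> C} = {e \<in> edges (H i). e \<subseteq> C}"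
  proof (rule set_eqI, rule iffI)
    fix e assume "e \<in> {e \<in> edges G. e \<subseteq> C}"
    then obtain k where k: "k \<in> I" "e \<in> edges (H k)" "e \<subseteq> C" unfolding eG by blast
    then obtain a where "a \<in> e" "e \<subseteq> V k" using edge_in by blast
    then have "k = i" using uniq k assms by blast
    then show "e \<in> {e \<in> edges (H i). e \<subseteq> C}" using k by blast
  next
    fix e assume "e \<in> {e \<in> edges (H i). e \<subseteq> C}" then show "e \<in> {e \<in> edges G. e \<subseteq> C}"
      unfolding eG using assms by blast
  qed
  then show ?thesis unfolding induced_def by simp
qed

lemma compsG: "components G = (\<Union>i\<in>I. components (H i))"
proof -
  have "components G = induced G ` (\<Union>i\<in>I. comp_sets (H i))"
    unfolding components_def compsetsG by simp
  also have "\<dots> = (\<Union>i\<in>I. induced G ` comp_sets (H i))" by (rule image_UN)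
  also have "\<dots> = (\<Union>i\<in>I. induced (H i) ` comp_sets (H i))"
  proof (rule SUP_cong[OF refl])
    fix i assume "i \<in> I"
    then show "induced G ` comp_sets (H i) = induced (H i) ` comp_sets (H i)"
      using induced_eq compsets_sub by (intro image_cong) auto
  qed
  finally show ?thesis unfolding components_def by simp
qed

lemma comp_verts: "i \<in> I \<Longrightarrow> C \<in> components (H i) \<Longrightarrow> verts C \<subseteq> V i \<and> verts C \<noteq> {}"
proof -
  assume a: "i \<in> I" "C \<in> components (H i)"
  then obtain D where D: "D \<in> comp_sets (H i)" "C = induced (H i) D" unfolding components_def by blast
  then have "verts C = D" by (simp add: induced_def)
  then show ?thesis using compsets_sub[OF a(1) D(1)] by simp
qed

lemma comp_uniq: assumes "i \<in> I" "j \<in> I" "C \<in> components (H i)" "C \<in> components (H j)" shows "i = j"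
proof -
  obtain a where "a \<in> verts C" using comp_verts[OF assms(1,3)] by blast
  then show ?thesis using comp_verts[OF assms(1,3)] comp_verts[OF assms(2,4)] uniq[OF assms(1,2)] by blast
qed

lemma sumG: assumes "B \<subseteq> verts G" shows "x G B \<longleftrightarrow> (\<exists>f. (\<forall>C\<in>components G. f C \<subseteq> verts C \<and> x C (f C)) \<and> B = (\<Union>C\<in>components G. f C))"
  by (rule mp[OF spec[OF mp[OF spec[OF summ[unfolded summable_def], of G] graphG], of B] assms])

lemma sumH: assumes "i \<in> I" "B \<subseteq> V i" shows "x (H i) B \<longleftrightarrow> (\<exists>f. (\<forall>C\<in>components (H i). f C \<subseteq> verts C \<and> x C (f C)) \<and> B = (\<Union>C\<in>components (H i). f C))"
  by (rule mp[OF spec[OF mp[OF spec[OF summ[unfolded summable_def], of "H i"] gr[OF assms(1)]], of B] assms(2)])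

lemma split_union: "B \<subseteq> verts G \<Longrightarrow> B = (\<Union>i\<in>I. B \<inter> V i)"
  unfolding vG by blast

lemma glue: assumes "\<And>i. i \<in> I \<Longrightarrow> B i \<subseteq> V i" "j \<in> I"
  shows "(\<Union>i\<in>I. B i) \<inter> V j = B j"
proof
  show "(\<Union>i\<in>I. B i) \<inter> V j \<subseteq> B j"
  proof
    fix y assume "y \<in> (\<Union>i\<in>I. B i) \<inter> V j"
    then obtain i where "i \<in> I" "y \<in> B i" "y \<in> V j" by blast
    moreover then have "y \<in> V i" using assms(1) by blast
    ultimately show "y \<in> B j" using uniq[OF _ assms(2)] by blast
  qed
next
  show "B j \<subseteq> (\<Union>i\<in>I. B i) \<inter> V j" using assms by blast
qed

lemma charx: assumes B: "B \<subseteq> verts G" shows "x G B \<longleftrightarrow> (\<forall>i\<in>I. x (H i) (B \<inter> V i))"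
proof
  assume "x G B"
  then obtain f where f: "\<forall>C\<in>components G. f C \<subseteq> verts C \<and> x C (f C)" "B = (\<Union>C\<in>components G. f C)"
    using sumG[OF B] by blast
  show "\<forall>i\<in>I. x (H i) (B \<inter> V i)"
  proof
    fix i assume i: "i \<in> I"
    have "B \<inter> V i = (\<Union>C\<in>components (H i). f C)"
    proof
      show "B \<inter> V i \<subseteq> (\<Union>C\<in>components (H i). f C)"
      proof
        fix y assume y: "y \<in> B \<inter> V i"
        then obtain C where C: "C \<in> components G" "y \<in> f C" using f(2) by blast
        then obtain k where k: "k \<in> I" "C \<in> components (H k)" using compsG by blast
        have "y \<in> V k" using C f(1) comp_verts[OF k] by blast
        then have "k = i" using uniq[OF k(1) i] y by blast
        then show "y \<in> (\<Union>C\<in>components (H i). f C)" using k C by blast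
      qed
    next
      show "(\<Union>C\<in>components (H i). f C) \<subseteq> B \<inter> V i"
      proof
        fix y assume "y \<in> (\<Union>C\<in>components (H i). f C)"
        then obtain C where C: "C \<in> components (H i)" "y \<in> f C" by blast
        then have CG: "C \<in> components G" using compsG i by blast
        then have "y \<in> B" using f(2) C by blast
        moreover have "y \<in> V i" using C CG f(1) comp_verts[OF i C(1)] by blast
        ultimately show "y \<in> B \<inter> V i" by blast
      qed
    qed
    moreover have "\<forall>C\<in>components (H i). f C \<subseteq> verts C \<and> x C (f C)"
      using f(1) compsG i by blast
    ultimately show "x (H i) (B \<inter> V i)" using sumH[OF i, of "B \<inter> V i"] by blast
  qed
next
  assume a: "\<forall>i\<in>I. x (H i) (B \<inter> V i)"
  have "\<forall>i\<in>I. \<exists>f. (\<forall>C\<in>components (H i). f C \<subseteq> verts C \<and> x C (f C)) \<and> B \<inter> V i = (\<Union>C\<in>components (H i). f C)"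
  proof
    fix i assume i: "i \<in> I"
    show "\<exists>f. (\<forall>C\<in>components (H i). f C \<subseteq> verts C \<and> x C (f C)) \<and> B \<inter> V i = (\<Union>C\<in>components (H i). f C)"
      using sumH[OF i, of "B \<inter> V i"] a i by blast
  qed
  then obtain F where F0: "\<forall>i\<in>I. (\<forall>C\<in>components (H i). F i C \<subseteq> verts C \<and> x C (F i C)) \<and> B \<inter> V i = (\<Union>C\<in>components (H i). F i C)"
    by (rule bchoice[elim_format]) blast
  have F: "\<And>i. i \<in> I \<Longrightarrow> (\<forall>C\<in>components (H i). F i C \<subseteq> verts C \<and> x C (F i C)) \<and> B \<inter> V i = (\<Union>C\<in>components (H i). F i C)"
    using F0 by blast
  define ix where "ix C = (SOME i. i \<in> I \<and> C \<in> components (H i))" for C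
  define f where "f C = F (ix C) C" for C
  have ixI: "ix C = i" if "i \<in> I" "C \<in> components (H i)" for i C
  proof -
    have "ix C \<in> I \<and> C \<in> components (H (ix C))"
      unfolding ix_def by (rule someI[of _ i]) (use that in blast)
    then show ?thesis using comp_uniq that by blast
  qed
  have fi: "f C = F i C" if "i \<in> I" "C \<in> components (H i)" for i C
    using ixI[OF that] f_def by simp
  have 1: "\<forall>C\<in>components G. f C \<subseteq> verts C \<and> x C (f C)"
  proof
    fix C assume "C \<in> components G"
    then obtain i where i: "i \<in> I" "C \<in> components (H i)" using compsG by blast
    then show "f C \<subseteq> verts C \<and> x C (f C)" using fi[OF i] F[OF i(1)] by simp
  qed
  have "B = (\<Union>i\<in>I. B \<inter> V i)" using split_union[OF B] .
  also have "\<dots> = (\<Union>i\<in>I. \<Union>C\<in>components (H i). F i C)" using F by simp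
  also have "\<dots> = (\<Union>i\<in>I. \<Union>C\<in>components (H i). f C)" using fi by simp
  also have "\<dots> = (\<Union>C\<in>components G. f C)" unfolding compsG by simp
  finally show "x G B" using sumG[OF B] 1 by blast
qed

lemma cardG: assumes "B \<subseteq> verts G" shows "card B = (\<Sum>i\<in>I. card (B \<inter> V i))"
proof -
  have "card B = card (\<Union>i\<in>I. B \<inter> V i)" using split_union[OF assms] by simp
  also have "\<dots> = (\<Sum>i\<in>I. card (B \<inter> V i))"
  proof -
    have f: "\<forall>i\<in>I. finite (B \<inter> V i)" using finV by blast
    have d: "\<forall>i\<in>I. \<forall>j\<in>I. i \<noteq> j \<longrightarrow> (B \<inter> V i) \<inter> (B \<inter> V j) = {}"
    proof (intro ballI impI)
      fix i j assume "i \<in> I" "j \<in> I" "i \<noteq> j"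
      then have "V i \<inter> V j = {}" using disj by blast
      then show "(B \<inter> V i) \<inter> (B \<inter> V j) = {}" by blast
    qed
    show ?thesis using card_UN_disjoint[OF finite_atLeastAtMost f d] .
  qed
  finally show ?thesis .
qed

lemma finK: "finite {card B | B. B \<subseteq> verts K \<and> P B}" if "finite (verts K)" for K :: "'v graph" and P
proof -
  have "{card B | B. B \<subseteq> verts K \<and> P B} \<subseteq> card ` Pow (verts K)" by blast
  then show ?thesis using finite_subset that by blast
qed

lemma solI: "S \<in> sol_sets m x K \<longleftrightarrow> S \<subseteq> verts K \<and> x K S \<and> card S = param_val m x K"
  by (simp add: sol_sets_def)

lemma sol_char:
  assumes ne: "\<forall>i\<in>I. \<exists>B. B \<subseteq> V i \<and> x (H i) B"
  shows "S \<in> sol_sets m x G \<longleftrightarrow> S \<subseteq> verts G \<and> (\<forall>i\<in>I. S \<inter> V i \<in> sol_sets m x (H i))"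
proof -
  define K where "K i = {card B | B. B \<subseteq> V i \<and> x (H i) B}" for i
  define P where "P i = param_val m x (H i)" for i
  have finKi: "finite (K i)" if "i \<in> I" for i unfolding K_def by (rule finK[OF finV[OF that]])
  have neK: "K i \<noteq> {}" if "i \<in> I" for i unfolding K_def using ne that by blast
  have Peq: "P i = (if m then Max (K i) else Min (K i))" for i
    by (simp add: P_def param_val_def K_def)
  have Pin: "P i \<in> K i" if "i \<in> I" for i
  proof (cases m)
    case True then show ?thesis using Peq Max_in[OF finKi[OF that] neK[OF that]] by simp
  next
    case False then show ?thesis using Peq Min_in[OF finKi[OF that] neK[OF that]] by simp
  qed
  have Pb: "if m then k \<le> P i else P i \<le> k" if "i \<in> I" "k \<in> K i" for i k
  proof (cases m)
    case True then show ?thesis using Peq Max_ge[OF finKi[OF that(1)] that(2)] by simp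
  next
    case False then show ?thesis using Peq Min_le[OF finKi[OF that(1)] that(2)] by simp
  qed
  have inK: "card (B \<inter> V i) \<in> K i" if "B \<subseteq> verts G" "x G B" "i \<in> I" for B i
    using charx[OF that(1)] that unfolding K_def by blast
  have PG: "param_val m x G = (\<Sum>i\<in>I. P i)"
  proof -
    define KG where "KG = {card B | B. B \<subseteq> verts G \<and> x G B}"
    have fG: "finite (verts G)" using graphG unfolding graph_def by (rule conjunct1)
    have finKG: "finite KG" unfolding KG_def by (rule finK[OF fG])
    have ex: "\<exists>B. B \<subseteq> V i \<and> x (H i) B \<and> card B = P i" if "i \<in> I" for i
    proof -
      have "P i \<in> {card B | B. B \<subseteq> V i \<and> x (H i) B}" using Pin[OF that] by (simp only: K_def)
      then obtain B where "P i = card B" "B \<subseteq> V i" "x (H i) B" by (auto simp only: mem_Collect_eq)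
      then show ?thesis by auto
    qed
    have "\<forall>i\<in>I. \<exists>B. B \<subseteq> V i \<and> x (H i) B \<and> card B = P i" using ex by blast
    then obtain Bw where Bw0: "\<forall>i\<in>I. Bw i \<subseteq> V i \<and> x (H i) (Bw i) \<and> card (Bw i) = P i"
      by (rule bchoice[elim_format]) blast
    have Bw: "\<And>i. i \<in> I \<Longrightarrow> Bw i \<subseteq> V i \<and> x (H i) (Bw i) \<and> card (Bw i) = P i"
      using Bw0 by blast
    define B0 where "B0 = (\<Union>i\<in>I. Bw i)"
    have B0G: "B0 \<subseteq> verts G" unfolding B0_def vG using Bw by blast
    have BwV: "\<And>i. i \<in> I \<Longrightarrow> Bw i \<subseteq> V i" using Bw by blast
    have B0i: "B0 \<inter> V i = Bw i" if "i \<in> I" for i unfolding B0_def by (rule glue[OF BwV that])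
    have "x G B0" using charx[OF B0G] B0i Bw by simp
    moreover have "card B0 = (\<Sum>i\<in>I. P i)" using cardG[OF B0G] B0i Bw by simp
    ultimately have "B0 \<subseteq> verts G \<and> x G B0 \<and> (\<Sum>i\<in>I. P i) = card B0" using B0G by simp
    then have inG: "(\<Sum>i\<in>I. P i) \<in> KG" unfolding KG_def by blast
    have bd: "if m then k \<le> (\<Sum>i\<in>I. P i) else (\<Sum>i\<in>I. P i) \<le> k" if "k \<in> KG" for k
    proof -
      obtain B where B: "k = card B" "B \<subseteq> verts G" "x G B" using \<open>k \<in> KG\<close> unfolding KG_def by blast
      have k: "k = (\<Sum>i\<in>I. card (B \<inter> V i))" using cardG[OF B(2)] B(1) by simp
      show ?thesis
      proof (cases m)
        case True
        have "card (B \<inter> V i) \<le> P i" if "i \<in> I" for i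
          using Pb[OF that inK[OF B(2,3) that]] True by simp
        then have "(\<Sum>i\<in>I. card (B \<inter> V i)) \<le> (\<Sum>i\<in>I. P i)"
          by (intro sum_mono) blast
        then show ?thesis using k True by simp
      next
        case False
        have "P i \<le> card (B \<inter> V i)" if "i \<in> I" for i
          using Pb[OF that inK[OF B(2,3) that]] False by simp
        then have "(\<Sum>i\<in>I. P i) \<le> (\<Sum>i\<in>I. card (B \<inter> V i))"
          by (intro sum_mono) blast
        then show ?thesis using k False by simp
      qed
    qed
    show ?thesis
    proof (cases m)
      case True
      then have "Max KG = (\<Sum>i\<in>I. P i)" using finKG inG bd by (intro Max_eqI) auto
      then show ?thesis using True unfolding param_val_def KG_def by simp
    next
      case False
      then have "Min KG = (\<Sum>i\<in>I. P i)" using finKG inG bd by (intro Min_eqI) auto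
      then show ?thesis using False unfolding param_val_def KG_def by simp
    qed
  qed
  show ?thesis
  proof
    assume S: "S \<in> sol_sets m x G"
    then have S1: "S \<subseteq> verts G" "x G S" "card S = (\<Sum>i\<in>I. P i)" using PG by (simp_all add: solI)
    have xi: "x (H i) (S \<inter> V i)" if "i \<in> I" for i using charx[OF S1(1)] S1(2) that by blast
    have sumeq: "(\<Sum>i\<in>I. card (S \<inter> V i)) = (\<Sum>i\<in>I. P i)" using cardG[OF S1(1)] S1(3) by simp
    have ci: "card (S \<inter> V i) = P i" if "i \<in> I" for i
    proof (cases m)
      case True
      have "card (S \<inter> V i) \<le> P i" if "i \<in> I" for i
        using Pb[OF that inK[OF S1(1,2) that]] True by simp
      then show ?thesis using sum_mono_inv[OF sumeq _ that] by blast
    next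
      case False
      have "P i \<le> card (S \<inter> V i)" if "i \<in> I" for i
        using Pb[OF that inK[OF S1(1,2) that]] False by simp
      then show ?thesis using sum_mono_inv[OF sumeq[symmetric] _ that] by simp
    qed
    show "S \<subseteq> verts G \<and> (\<forall>i\<in>I. S \<inter> V i \<in> sol_sets m x (H i))"
      using S1(1) xi ci unfolding solI P_def by blast
  next
    assume S: "S \<subseteq> verts G \<and> (\<forall>i\<in>I. S \<inter> V i \<in> sol_sets m x (H i))"
    have si: "S \<inter> V i \<subseteq> V i \<and> x (H i) (S \<inter> V i) \<and> card (S \<inter> V i) = P i" if "i \<in> I" for i
      using S that unfolding solI P_def by blast
    have "x G S" using charx S si by blast
    moreover have "card S = (\<Sum>i\<in>I. P i)" using cardG S si by simp
    ultimately show "S \<in> sol_sets m x G" using S PG by (simp add: solI)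
  qed
qed

lemma empty_case:
  assumes "i0 \<in> I" "\<not> (\<exists>B. B \<subseteq> V i0 \<and> x (H i0) B)"
  shows "sol_sets m x G = {}" "sol_sets m x (H i0) = {}"
proof -
  show "sol_sets m x (H i0) = {}" using assms(2) unfolding sol_sets_def by blast
  show "sol_sets m x G = {}"
  proof (rule ccontr)
    assume "sol_sets m x G \<noteq> {}"
    then obtain S where "S \<subseteq> verts G" "x G S" unfolding sol_sets_def by blast
    then have "x (H i0) (S \<inter> V i0)" using charx assms(1) by blast
    then show False using assms(2) by blast
  qed
qed

lemma core:
  assumes ne: "\<forall>i\<in>I. \<exists>B. B \<subseteq> V i \<and> x (H i) B"
    and hQ: "\<And>j a b. j \<in> I \<Longrightarrow> a \<in> V j \<Longrightarrow> b \<in> V j \<Longrightarrow> Q G a b = Q (H j) a b"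
    and S1: "S1 \<in> sol_sets m x G" and S2: "S2 \<in> sol_sets m x G"
  shows "exq (Q G) S1 S2 \<longleftrightarrow>
    (\<exists>j\<in>I. exq (Q (H j)) (S1 \<inter> V j) (S2 \<inter> V j) \<and> (\<forall>i\<in>I - {j}. S1 \<inter> V i = S2 \<inter> V i))"
proof -
  have S1c: "S1 \<subseteq> verts G" "\<And>i. i \<in> I \<Longrightarrow> S1 \<inter> V i \<in> sol_sets m x (H i)"
    using sol_char[OF ne, of S1] S1 by (simp_all add: solI)
  have S2c: "S2 \<subseteq> verts G" "\<And>i. i \<in> I \<Longrightarrow> S2 \<inter> V i \<in> sol_sets m x (H i)"
    using sol_char[OF ne, of S2] S2 by (simp_all add: solI)
  have ceq: "card (S1 \<inter> V i) = card (S2 \<inter> V i)" if "i \<in> I" for i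
    using S1c(2)[OF that] S2c(2)[OF that] by (simp add: solI)
  show ?thesis
  proof
    assume "exq (Q G) S1 S2"
    then obtain v1 v2 where v: "v1 \<in> S1 - S2" "v2 \<in> S2 - S1" "S1 - {v1} = S2 - {v2}" "Q G v1 v2"
      unfolding exq_def by blast
    obtain j where j: "j \<in> I" "v1 \<in> V j" using v(1) S1c(1) unfolding vG by blast
    obtain k where k: "k \<in> I" "v2 \<in> V k" using v(2) S2c(1) unfolding vG by blast
    have eqi: "S1 \<inter> V i - {v1} = S2 \<inter> V i - {v2}" for i using v(3) by blast
    have "k = j"
    proof (rule ccontr)
      assume "k \<noteq> j"
      then have "v2 \<notin> V j" using uniq[OF j(1) k(1)] k(2) by blast
      then have e: "S1 \<inter> V j - {v1} = S2 \<inter> V j" using eqi[of j] by blast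
      have fin: "finite (S1 \<inter> V j)" using finV[OF j(1)] by simp
      have v1in: "v1 \<in> S1 \<inter> V j" using v(1) j(2) by blast
      have "card (S1 \<inter> V j - {v1}) = card (S1 \<inter> V j) - 1" using v1in fin by simp
      moreover have "card (S1 \<inter> V j) > 0" using fin v1in card_gt_0_iff by blast
      ultimately show False using e ceq[OF j(1)] by simp
    qed
    have other: "\<forall>i\<in>I - {j}. S1 \<inter> V i = S2 \<inter> V i"
    proof
      fix i assume i: "i \<in> I - {j}"
      then have "v1 \<notin> V i" "v2 \<notin> V i" using uniq[OF _ j(1)] j(2) k(2) \<open>k = j\<close> by blast+
      then show "S1 \<inter> V i = S2 \<inter> V i" using eqi[of i] by blast
    qed
    have "Q (H j) v1 v2" using v(4) hQ[OF j(1) j(2)] k(2) \<open>k = j\<close> by simp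
    then have "exq (Q (H j)) (S1 \<inter> V j) (S2 \<inter> V j)"
      unfolding exq_def using v j(2) k(2) \<open>k = j\<close> eqi[of j] by blast
    then show "\<exists>j\<in>I. exq (Q (H j)) (S1 \<inter> V j) (S2 \<inter> V j) \<and> (\<forall>i\<in>I - {j}. S1 \<inter> V i = S2 \<inter> V i)"
      using j(1) other by blast
  next
    assume "\<exists>j\<in>I. exq (Q (H j)) (S1 \<inter> V j) (S2 \<inter> V j) \<and> (\<forall>i\<in>I - {j}. S1 \<inter> V i = S2 \<inter> V i)"
    then obtain j where j: "j \<in> I" "exq (Q (H j)) (S1 \<inter> V j) (S2 \<inter> V j)"
      "\<forall>i\<in>I - {j}. S1 \<inter> V i = S2 \<inter> V i" by blast
    then obtain v1 v2 where v: "v1 \<in> S1 \<inter> V j - S2 \<inter> V j" "v2 \<in> S2 \<inter> V j - S1 \<inter> V j"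
      "S1 \<inter> V j - {v1} = S2 \<inter> V j - {v2}" "Q (H j) v1 v2"
      unfolding exq_def by blast
    have "S1 - {v1} = S2 - {v2}"
    proof (rule set_eqI)
      fix y
      show "y \<in> S1 - {v1} \<longleftrightarrow> y \<in> S2 - {v2}"
      proof (cases "y \<in> verts G")
        case False then show ?thesis using S1c(1) S2c(1) by blast
      next
        case True
        then obtain i where i: "i \<in> I" "y \<in> V i" unfolding vG by blast
        show ?thesis
        proof (cases "i = j")
          case True then show ?thesis using v(3) i(2) by blast
        next
          case False
          then have "y \<noteq> v1" "y \<noteq> v2" using uniq[OF i(1) j(1)] i(2) v(1,2) by blast+
          moreover have "S1 \<inter> V i = S2 \<inter> V i" using j(3) i(1) False by blast
          ultimately show ?thesis using i(2) by blast
        qed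
      qed
    qed
    moreover have "Q G v1 v2" using v(4) hQ[OF j(1)] v(1,2) by blast
    ultimately show "exq (Q G) S1 S2" unfolding exq_def using v(1,2) by blast
  qed
qed

lemma iso_gen:
  assumes sym: "\<And>K a b. Q K a b = Q K b a"
    and hQ: "\<And>j a b. j \<in> I \<Longrightarrow> a \<in> V j \<Longrightarrow> b \<in> V j \<Longrightarrow> Q G a b = Q (H j) a b"
  shows "graph_iso (Rg Q m x G) (cart_prod N (\<lambda>i. Rg Q m x (H i)))"
proof (cases "\<forall>i\<in>I. \<exists>B. B \<subseteq> V i \<and> x (H i) B")
  case False
  then obtain i0 where i0: "i0 \<in> I" "\<not> (\<exists>B. B \<subseteq> V i0 \<and> x (H i0) B)" by blast
  have e1: "verts (Rg Q m x G) = {}" using empty_case(1)[OF i0] by (simp add: Rg_def)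
  have "verts (Rg Q m x (H i0)) = {}" using empty_case(2)[OF i0] by (simp add: Rg_def)
  then have "Pi\<^sub>E I (\<lambda>i. verts (Rg Q m x (H i))) = {}"
    unfolding PiE_eq_empty_iff using i0(1) by blast
  then have e2: "verts (cart_prod N (\<lambda>i. Rg Q m x (H i))) = {}"
    unfolding cart_prod_def by simp
  show ?thesis unfolding graph_iso_def e1 e2 by (rule exI[of _ "\<lambda>_. undefined"]) (simp add: bij_betw_def)
next
  case True
  note ne = True
  define \<phi> where "\<phi> S = restrict (\<lambda>i. S \<inter> V i) I" for S
  define W where "W = Pi\<^sub>E I (\<lambda>i. verts (Rg Q m x (H i)))"
  have vR: "verts (Rg Q m x K) = sol_sets m x K" for K by (simp add: Rg_def)
  have vC: "verts (cart_prod N (\<lambda>i. Rg Q m x (H i))) = W" unfolding W_def cart_prod_def by simp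
  have phiW: "\<phi> S \<in> W" if "S \<in> sol_sets m x G" for S
  proof -
    have "\<forall>i\<in>I. S \<inter> V i \<in> sol_sets m x (H i)" using sol_char[OF ne, of S] that by simp
    then show ?thesis unfolding W_def \<phi>_def vR by (simp add: restrict_PiE_iff)
  qed
  have bij: "bij_betw \<phi> (sol_sets m x G) W"
  proof (rule bij_betw_imageI)
    show "inj_on \<phi> (sol_sets m x G)"
    proof (rule inj_onI)
      fix S T assume S: "S \<in> sol_sets m x G" and T: "T \<in> sol_sets m x G" and e: "\<phi> S = \<phi> T"
      have eqs: "S \<inter> V i = T \<inter> V i" if "i \<in> I" for i
        using fun_cong[OF e, of i] that unfolding \<phi>_def by simp
      have SG: "S \<subseteq> verts G" "T \<subseteq> verts G" using S T by (simp_all add: solI)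
      have "S = (\<Union>i\<in>I. S \<inter> V i)" by (rule split_union[OF SG(1)])
      also have "\<dots> = (\<Union>i\<in>I. T \<inter> V i)" by (rule SUP_cong[OF refl]) (rule eqs)
      also have "\<dots> = T" by (rule split_union[OF SG(2), symmetric])
      finally show "S = T" .
    qed
  next
    show "\<phi> ` sol_sets m x G = W"
    proof
      show "\<phi> ` sol_sets m x G \<subseteq> W" using phiW by blast
    next
      show "W \<subseteq> \<phi> ` sol_sets m x G"
      proof
        fix f assume f: "f \<in> W"
        have fi: "f i \<in> sol_sets m x (H i)" if "i \<in> I" for i
          using PiE_mem[OF f[unfolded W_def] that] unfolding vR .
        have fV: "\<And>i. i \<in> I \<Longrightarrow> f i \<subseteq> V i" using fi by (simp add: solI)
        define S where "S = (\<Union>i\<in>I. f i)"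
        have Si: "S \<inter> V i = f i" if "i \<in> I" for i unfolding S_def by (rule glue[OF fV that])
        have SG: "S \<subseteq> verts G" unfolding S_def vG using fV by blast
        have "\<forall>i\<in>I. S \<inter> V i \<in> sol_sets m x (H i)" using Si fi by simp
        then have "S \<in> sol_sets m x G" using sol_char[OF ne, of S] SG by blast
        moreover have "\<phi> S = f"
        proof (rule ext)
          fix i show "\<phi> S i = f i"
          proof (cases "i \<in> I")
            case True then show ?thesis using Si unfolding \<phi>_def by simp
          next
            case False
            have "f i = undefined" by (rule PiE_arb[OF f[unfolded W_def] False])
            then show ?thesis unfolding \<phi>_def restrict_apply if_not_P[OF False] by simp
          qed
        qed
        ultimately show "f \<in> \<phi> ` sol_sets m x G" by blast
      qed
    qed
  qed
  show ?thesis unfolding graph_iso_def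
  proof (rule exI[of _ \<phi>], rule conjI)
    show "bij_betw \<phi> (verts (Rg Q m x G)) (verts (cart_prod N (\<lambda>i. Rg Q m x (H i))))"
      unfolding vR vC by (rule bij)
    show "\<forall>u\<in>verts (Rg Q m x G). \<forall>v\<in>verts (Rg Q m x G).
      ({u, v} \<in> edges (Rg Q m x G)) = ({\<phi> u, \<phi> v} \<in> edges (cart_prod N (\<lambda>i. Rg Q m x (H i))))"
    proof (intro ballI)
      fix u v assume u: "u \<in> verts (Rg Q m x G)" and v: "v \<in> verts (Rg Q m x G)"
      have us: "u \<in> sol_sets m x G" using u unfolding vR .
      have vs: "v \<in> sol_sets m x G" using v unfolding vR .
      have ui: "u \<inter> V i \<in> sol_sets m x (H i)" if "i \<in> I" for i using sol_char[OF ne, of u] us that by simp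
      have vi: "v \<inter> V i \<in> sol_sets m x (H i)" if "i \<in> I" for i using sol_char[OF ne, of v] vs that by simp
      have "({u, v} \<in> edges (Rg Q m x G)) = exq (Q G) u v" by (rule Rg_edge[OF sym us vs])
      also have "\<dots> = (\<exists>j\<in>I. exq (Q (H j)) (u \<inter> V j) (v \<inter> V j) \<and> (\<forall>i\<in>I - {j}. u \<inter> V i = v \<inter> V i))"
        by (rule core[OF ne hQ us vs])
      also have "\<dots> = (\<exists>j\<in>I. {\<phi> u j, \<phi> v j} \<in> edges (Rg Q m x (H j)) \<and> (\<forall>i\<in>I - {j}. \<phi> u i = \<phi> v i))"
      proof (rule bex_cong[OF refl])
        fix j assume j: "j \<in> I"
        have pj: "\<phi> u j = u \<inter> V j" "\<phi> v j = v \<inter> V j" unfolding \<phi>_def using j by simp_all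
        have "{\<phi> u j, \<phi> v j} \<in> edges (Rg Q m x (H j)) \<longleftrightarrow> exq (Q (H j)) (u \<inter> V j) (v \<inter> V j)"
          unfolding pj by (rule Rg_edge[OF sym ui[OF j] vi[OF j]])
        moreover have "(\<forall>i\<in>I - {j}. \<phi> u i = \<phi> v i) \<longleftrightarrow> (\<forall>i\<in>I - {j}. u \<inter> V i = v \<inter> V i)"
        proof (rule ball_cong[OF refl])
          fix i assume "i \<in> I - {j}"
          then have "i \<in> I" by blast
          then show "(\<phi> u i = \<phi> v i) = (u \<inter> V i = v \<inter> V i)" unfolding \<phi>_def by simp
        qed
        ultimately show "(exq (Q (H j)) (u \<inter> V j) (v \<inter> V j) \<and> (\<forall>i\<in>I - {j}. u \<inter> V i = v \<inter> V i)) =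
          ({\<phi> u j, \<phi> v j} \<in> edges (Rg Q m x (H j)) \<and> (\<forall>i\<in>I - {j}. \<phi> u i = \<phi> v i))" by blast
      qed
      also have "\<dots> = ({\<phi> u, \<phi> v} \<in> edges (cart_prod N (\<lambda>i. Rg Q m x (H i))))"
        by (rule cart_edge[OF phiW[OF us, unfolded W_def] phiW[OF vs, unfolded W_def], symmetric])
      finally show "({u, v} \<in> edges (Rg Q m x G)) = ({\<phi> u, \<phi> v} \<in> edges (cart_prod N (\<lambda>i. Rg Q m x (H i))))" .
    qed
  qed
qed

end

theorem theorem3p3:
  fixes is_max :: bool and x :: "'v graph \<Rightarrow> 'v set \<Rightarrow> bool"
    and N :: nat and H :: "nat \<Rightarrow> 'v graph"
  assumes "summable x"
    and "\<And>i. i \<in> {1..N} \<Longrightarrow> graph (H i)"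
    and "\<And>i j. i \<in> {1..N} \<Longrightarrow> j \<in> {1..N} \<Longrightarrow> i \<noteq> j \<Longrightarrow> verts (H i) \<inter> verts (H j) = {}"
  shows "graph_iso (R_TE is_max x (union_graph N H)) (cart_prod N (\<lambda>i. R_TE is_max x (H i)))
       \<and> graph_iso (R_TS is_max x (union_graph N H)) (cart_prod N (\<lambda>i. R_TS is_max x (H i)))"
proof -
  interpret setup3 x N H using assms by unfold_locales
  have 1: "graph_iso (Rg (\<lambda>K a b. True) is_max x G) (cart_prod N (\<lambda>i. Rg (\<lambda>K a b. True) is_max x (H i)))"
    by (rule iso_gen) simp_all
  have 2: "graph_iso (Rg (\<lambda>K a b. {a, b} \<in> edges K) is_max x G)
      (cart_prod N (\<lambda>i. Rg (\<lambda>K a b. {a, b} \<in> edges K) is_max x (H i)))"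
  proof (rule iso_gen)
    show "\<And>K a b. ({a, b} \<in> edges K) = ({b, a} \<in> edges K)" by (simp add: insert_commute)
  next
    fix j a b assume j: "j \<in> I" and a: "a \<in> V j" and b: "b \<in> V j"
    show "({a, b} \<in> edges G) = ({a, b} \<in> edges (H j))"
    proof
      assume "{a, b} \<in> edges G"
      then obtain k where k: "k \<in> I" "{a, b} \<in> edges (H k)" unfolding eG by blast
      then have "a \<in> V k" using edge_in by blast
      then have "k = j" using uniq[OF k(1) j] a by blast
      then show "{a, b} \<in> edges (H j)" using k by simp
    next
      assume "{a, b} \<in> edges (H j)" then show "{a, b} \<in> edges G" unfolding eG using j by blast
    qed
  qed
  show ?thesis unfolding R_TE_eq R_TS_eq using 1 2 by blast
qed

end
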